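(* If $\mu\in\mathcal{L}$, then for each $x\in\mathbb{R}$ at most one element of the set $\{x+2\pi n : n\in\mathbb{Z}\}$ is an atom of $\mu$.
   Context: For a probability measure $\mu$ on $\mathbb{R}$, $G_\mu(z)=\int\frac{d\mu(x)}{z-x}$ and $F_\mu=1/G_\mu$ on the upper half-plane $\mathbb{C}^+$. $\mathcal{L}$ is the set of probability measures $\mu$ on $\mathbb{R}$ with $F_\mu(z+2\pi)=F_\mu(z)+2\pi$ for all $z\in\mathbb{C}^+$. *)

theory Defs
  imports "HOL-Probability.Probability"
begin

definition cauchy_transform :: "real measure \<Rightarrow> complex \<Rightarrow> complex" where
  "cauchy_transform M z = (\<integral>x. 1 / (z - complex_of_real x) \<partial>M)"

definition F_transform :: "real measure \<Rightarrow> complex \<Rightarrow> complex" where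
  "F_transform M z = 1 / cauchy_transform M z"

definition class_L :: "real measure \<Rightarrow> bool" where
  "class_L M \<longleftrightarrow> prob_space M \<and> sets M = sets borel \<and>
     (\<forall>z. Im z > 0 \<longrightarrow> F_transform M (z + 2 * complex_of_real pi) = F_transform M z + 2 * complex_of_real pi)"

definition is_atom :: "real measure \<Rightarrow> real \<Rightarrow> bool" where
  "is_atom M y \<longleftrightarrow> measure M {y} > 0"

end

theory Submission
  imports Defs
begin

lemma im_g: "Im (1 / (Complex a y - complex_of_real x)) = - (y / ((a - x)^2 + y^2))"
  by (simp add: Im_divide power2_eq_square)

lemma norm_g: assumes "y > 0" shows "cmod (1 / (Complex a y - complex_of_real x)) \<le> 1 / y"
proof -
  have "\<bar>y\<bar> \<le> cmod (Complex a y - complex_of_real x)"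
    using abs_Im_le_cmod[of "Complex a y - complex_of_real x"] by simp
  then show ?thesis using assms by (simp add: norm_divide divide_simps)
qed

lemma atom_bound:
  assumes L: "class_L M" and c: "measure M {a} = c" "c > 0" and y: "y > 0"
  shows "cmod (F_transform M (Complex a y)) \<le> y / c"
proof -
  interpret prob_space M using L by (simp add: class_L_def)
  have sM: "sets M = sets borel" using L by (simp add: class_L_def)
  define g where "g x = 1 / (Complex a y - complex_of_real x)" for x
  define h where "h x = y / ((a - x)^2 + y^2)" for x
  have ne: "Complex a y - complex_of_real x \<noteq> 0" for x using y by (simp add: complex_eq_iff)
  have "continuous_on UNIV g" unfolding g_def
    by (intro continuous_intros) (use ne in auto)
  then have "g \<in> borel_measurable borel" by (rule borel_measurable_continuous_onI)
  then have gm: "g \<in> borel_measurable M" using measurable_cong_sets[OF sM refl, of borel] by blast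
  have gi: "integrable M g"
    by (rule integrable_const_bound[where B="1/y"]) (use norm_g[OF y] gm in \<open>auto simp: g_def\<close>)
  have hi: "integrable M h"
  proof -
    have "integrable M (\<lambda>x. Im (g x))" using gi by simp
    then have "integrable M (\<lambda>x. - h x)" by (simp add: g_def h_def im_g)
    then show ?thesis by simp
  qed
  have space: "space M = UNIV" using sets_eq_imp_space_eq[OF sM] by simp
  have ii: "integrable M (\<lambda>x. indicator {a} x * (1/y) :: real)"
    by (intro integrable_mult_left integrable_real_indicator) (simp_all add: sM emeasure_finite less_top[symmetric])
  have "(\<integral>x. indicator {a} x * (1/y) \<partial>M) \<le> (\<integral>x. h x \<partial>M)"
    by (rule integral_mono[OF ii hi]) (use y in \<open>auto simp: h_def indicator_def power2_eq_square\<close>)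
  moreover have "(\<integral>x. indicator {a} x * (1/y) \<partial>M) = c / y"
    using c space by simp
  ultimately have hb: "c / y \<le> (\<integral>x. h x \<partial>M)" by linarith
  have "Im (cauchy_transform M (Complex a y)) = \<integral>x. Im (g x) \<partial>M"
    unfolding cauchy_transform_def g_def[symmetric] using gi by simp
  also have "\<dots> = - (\<integral>x. h x \<partial>M)" by (simp add: g_def h_def im_g)
  finally have "c / y \<le> cmod (cauchy_transform M (Complex a y))"
    using hb abs_Im_le_cmod[of "cauchy_transform M (Complex a y)"] by linarith
  moreover have "c / y > 0" using c y by simp
  ultimately show ?thesis unfolding F_transform_def using c y
    by (simp add: norm_divide divide_simps) (metis mult.commute)
qed

lemma period_int:
  assumes L: "class_L M" and z: "Im z > 0"
  shows "F_transform M (z + 2 * complex_of_real pi * of_int k) = F_transform M z + 2 * complex_of_real pi * of_int k"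
proof (induction k rule: int_induct[where k=0])
  case base then show ?case by simp
next
  case (step1 i)
  have "Im (z + 2 * complex_of_real pi * of_int i) > 0" using z by simp
  then have "F_transform M (z + 2 * complex_of_real pi * of_int i + 2 * complex_of_real pi)
     = F_transform M (z + 2 * complex_of_real pi * of_int i) + 2 * complex_of_real pi"
    using L by (simp add: class_L_def)
  then show ?case using step1 by (simp add: algebra_simps)
next
  case (step2 i)
  have "Im (z + 2 * complex_of_real pi * of_int (i - 1)) > 0" using z by simp
  then have "F_transform M (z + 2 * complex_of_real pi * of_int (i - 1) + 2 * complex_of_real pi)
     = F_transform M (z + 2 * complex_of_real pi * of_int (i - 1)) + 2 * complex_of_real pi"
    using L by (simp add: class_L_def)
  moreover have "z + 2 * complex_of_real pi * of_int (i - 1) + 2 * complex_of_real pi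
      = z + 2 * complex_of_real pi * of_int i" by (simp add: algebra_simps)
  ultimately show ?case using step2 by (simp add: algebra_simps)
qed

theorem corollary4p13:
  fixes M :: "real measure" and x :: real
  assumes "class_L M"
  shows "\<forall>m n :: int. is_atom M (x + 2 * pi * real_of_int m) \<and> is_atom M (x + 2 * pi * real_of_int n) \<longrightarrow> m = n"
proof (intro allI impI; erule conjE; rule ccontr)
  fix m n :: int
  assume am: "is_atom M (x + 2 * pi * real_of_int m)" and an: "is_atom M (x + 2 * pi * real_of_int n)"
    and ne: "m \<noteq> n"
  define a where "a = x + 2 * pi * real_of_int m"
  define b where "b = x + 2 * pi * real_of_int n"
  define c1 where "c1 = measure M {a}"
  define c2 where "c2 = measure M {b}"
  have c1: "c1 > 0" and c2: "c2 > 0" using am an by (auto simp: is_atom_def a_def b_def c1_def c2_def)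
  define y where "y = min c1 c2"
  have y: "y > 0" using c1 c2 by (simp add: y_def)
  have b1: "cmod (F_transform M (Complex a y)) \<le> 1"
    using atom_bound[OF assms c1_def[symmetric] c1 y] c1 y by (simp add: y_def divide_simps)
  have b2: "cmod (F_transform M (Complex b y)) \<le> 1"
    using atom_bound[OF assms c2_def[symmetric] c2 y] c2 y by (simp add: y_def divide_simps)
  have "Complex b y = Complex a y + 2 * complex_of_real pi * of_int (n - m)"
    by (simp add: a_def b_def complex_eq_iff algebra_simps)
  then have eq: "F_transform M (Complex b y) = F_transform M (Complex a y) + 2 * complex_of_real pi * of_int (n - m)"
    using period_int[OF assms, of "Complex a y" "n - m"] y by simp
  have "2 * complex_of_real pi * of_int (n - m) = F_transform M (Complex b y) - F_transform M (Complex a y)"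
    using eq by simp
  then have "cmod (2 * complex_of_real pi * of_int (n - m)) \<le> 2"
    using b1 b2 norm_triangle_ineq4[of "F_transform M (Complex b y)" "F_transform M (Complex a y)"]
    by simp
  moreover have "cmod (2 * complex_of_real pi * of_int (n - m)) = 2 * pi * \<bar>real_of_int (n - m)\<bar>"
  proof -
    have "2 * complex_of_real pi * of_int (n - m) = complex_of_real (2 * pi * real_of_int (n - m))" by simp
    then show ?thesis by (simp only: norm_of_real) (simp add: abs_mult)
  qed
  moreover have "\<bar>real_of_int (n - m)\<bar> \<ge> 1" using ne by linarith
  moreover have "2 * pi * 1 \<le> 2 * pi * \<bar>real_of_int (n - m)\<bar>"
    using calculation(3) by (intro mult_left_mono) auto
  ultimately show False using pi_gt3 by linarith
qed

end
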